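(* Let $\mathcal A$ be an algebra over $k$, $\boldsymbol\sigma\in\mathrm{Aut}^n_{\mathrm{cfo}}(\mathcal A)$ and $\boldsymbol m\in\mathbb Z^n_{>0}$ with $\boldsymbol\sigma^{\boldsymbol m}=\mathbf{id}$. Then $M_{\boldsymbol m}(\mathcal A,\boldsymbol\sigma)$ and $M_{\mathrm{ord}(\boldsymbol\sigma)}(\mathcal A,\boldsymbol\sigma)$ are support-isomorphic.
   Context: $k$ is an algebraically closed field of characteristic $0$; primitive roots of unity $\zeta_n$ are fixed with $\zeta_{mn}^m=\zeta_n$. Algebras need not be associative or unital. $\mathrm{Aut}^n_{\mathrm{cfo}}(\mathcal A)$ is the set of $n$-tuples $\boldsymbol\sigma=(\sigma_1,\dots,\sigma_n)$ of pairwise commuting finite-order automorphisms; $\boldsymbol\sigma^{\boldsymbol m}=\mathbf{id}$ means $\sigma_i^{m_i}=\mathrm{id}$ for all $i$; $\mathrm{ord}(\boldsymbol\sigma)=(\mathrm{ord}(\sigma_1),\dots,\mathrm{ord}(\sigma_n))$. For $\lambda=(l_1,\dots,l_n)\in\mathbb Z^n$, $\mathcal A^{\bar\lambda}=\{u:\sigma_i(u)=\zeta_{m_i}^{l_i}u\ \forall i\}$ and $M_{\boldsymbol m}(\mathcal A,\boldsymbol\sigma)=\bigoplus_{\lambda}\mathcal A^{\bar\lambda}\otimes t^\lambda\subseteq\mathcal A\otimes k[t_1^{\pm1},\dots,t_n^{\pm1}]$, $\mathbb Z^n$-graded. Two $\mathbb Z^n$-graded algebras $\mathcal B,\mathcal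 B'$ are support-isomorphic if there exist an algebra isomorphism $\psi:\mathcal B\to\mathcal B'$ and a group isomorphism $\psi_{\mathrm{su}}$ from the subgroup generated by $\{\lambda:\mathcal B^\lambda\ne0\}$ onto the subgroup generated by $\{\lambda:\mathcal B'^\lambda\ne0\}$ with $\psi(\mathcal B^\lambda)=\mathcal B'^{\psi_{\mathrm{su}}(\lambda)}$ for all $\lambda$ in the former subgroup. *)

theory Defs
  imports "HOL-Computational_Algebra.Polynomial" "HOL-Library.Function_Algebras"
begin

definition alg_closed :: "'k::field itself \<Rightarrow> bool" where
  "alg_closed _ \<longleftrightarrow> (\<forall>p::'k poly. 0 < degree p \<longrightarrow> (\<exists>x. poly p x = 0))"

definition root_system :: "(nat \<Rightarrow> 'k::field) \<Rightarrow> bool" where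
  "root_system zeta \<longleftrightarrow>
     (\<forall>n>0. zeta n ^ n = 1 \<and> (\<forall>j. 0 < j \<and> j < n \<longrightarrow> zeta n ^ j \<noteq> 1)) \<and>
     (\<forall>m n. 0 < m \<and> 0 < n \<longrightarrow> zeta (m * n) ^ m = zeta n)"

definition is_algebra :: "('k::field \<Rightarrow> 'a::ab_group_add \<Rightarrow> 'a) \<Rightarrow> ('a \<Rightarrow> 'a \<Rightarrow> 'a) \<Rightarrow> bool" where
  "is_algebra sc mul \<longleftrightarrow> vector_space sc \<and>
     (\<forall>x. Vector_Spaces.linear sc sc (mul x)) \<and> (\<forall>y. Vector_Spaces.linear sc sc (\<lambda>x. mul x y))"

definition is_automorphism ::
  "('k::field \<Rightarrow> 'a::ab_group_add \<Rightarrow> 'a) \<Rightarrow> ('a \<Rightarrow> 'a \<Rightarrow> 'a) \<Rightarrow> ('a \<Rightarrow> 'a) \<Rightarrow> bool" where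
  "is_automorphism sc mul \<phi> \<longleftrightarrow> bij \<phi> \<and> Vector_Spaces.linear sc sc \<phi> \<and>
     (\<forall>x y. \<phi> (mul x y) = mul (\<phi> x) (\<phi> y))"

definition finite_order :: "('a \<Rightarrow> 'a) \<Rightarrow> bool" where
  "finite_order \<phi> \<longleftrightarrow> (\<exists>m::nat. 0 < m \<and> \<phi> ^^ m = id)"

definition aut_order :: "('a \<Rightarrow> 'a) \<Rightarrow> nat" where
  "aut_order \<phi> = (LEAST m::nat. 0 < m \<and> \<phi> ^^ m = id)"

text \<open>n-tuples of pairwise commuting finite-order automorphisms, indexed by a finite type 'n
  (so n = CARD('n)).\<close>
definition Aut_cfo ::
  "('k::field \<Rightarrow> 'a::ab_group_add \<Rightarrow> 'a) \<Rightarrow> ('a \<Rightarrow> 'a \<Rightarrow> 'a) \<Rightarrow> ('n::finite \<Rightarrow> 'a \<Rightarrow> 'a) set" where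
  "Aut_cfo sc mul = {\<sigma>. (\<forall>i. is_automorphism sc mul (\<sigma> i) \<and> finite_order (\<sigma> i)) \<and>
                        (\<forall>i j. \<sigma> i \<circ> \<sigma> j = \<sigma> j \<circ> \<sigma> i)}"

text \<open>A \<otimes> k[t^{\<plusminus>1}] is modelled as finitely supported functions Z^n \<Rightarrow> A;
  f corresponds to the sum of f lam \<otimes> t^lam.\<close>

definition eig_comp ::
  "('k::field \<Rightarrow> 'a::ab_group_add \<Rightarrow> 'a) \<Rightarrow> (nat \<Rightarrow> 'k) \<Rightarrow> ('n \<Rightarrow> 'a \<Rightarrow> 'a) \<Rightarrow> ('n \<Rightarrow> nat)
    \<Rightarrow> ('n \<Rightarrow> int) \<Rightarrow> 'a set" where
  "eig_comp sc zeta \<sigma> m lam = {u. \<forall>i. \<sigma> i u = sc (zeta (m i) powi lam i) u}"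

definition multiloop ::
  "('k::field \<Rightarrow> 'a::ab_group_add \<Rightarrow> 'a) \<Rightarrow> (nat \<Rightarrow> 'k) \<Rightarrow> ('n \<Rightarrow> 'a \<Rightarrow> 'a) \<Rightarrow> ('n \<Rightarrow> nat)
    \<Rightarrow> (('n \<Rightarrow> int) \<Rightarrow> 'a) set" where
  "multiloop sc zeta \<sigma> m =
     {f. finite {lam. f lam \<noteq> 0} \<and> (\<forall>lam. f lam \<in> eig_comp sc zeta \<sigma> m lam)}"

definition multiloop_deg ::
  "('k::field \<Rightarrow> 'a::ab_group_add \<Rightarrow> 'a) \<Rightarrow> (nat \<Rightarrow> 'k) \<Rightarrow> ('n \<Rightarrow> 'a \<Rightarrow> 'a) \<Rightarrow> ('n \<Rightarrow> nat)
    \<Rightarrow> ('n \<Rightarrow> int) \<Rightarrow> (('n \<Rightarrow> int) \<Rightarrow> 'a) set" where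
  "multiloop_deg sc zeta \<sigma> m lam =
     {f \<in> multiloop sc zeta \<sigma> m. \<forall>mu. mu \<noteq> lam \<longrightarrow> f mu = 0}"

text \<open>Operations of A \<otimes> k[t^{\<plusminus>1}]: pointwise scalar multiplication and the
  convolution product (addition is pointwise, from Function_Algebras).\<close>
definition lscale :: "('k \<Rightarrow> 'a \<Rightarrow> 'a) \<Rightarrow> 'k \<Rightarrow> ('g \<Rightarrow> 'a) \<Rightarrow> ('g \<Rightarrow> 'a)" where
  "lscale sc c f = (\<lambda>l. sc c (f l))"

definition lmul :: "('a::ab_group_add \<Rightarrow> 'a \<Rightarrow> 'a) \<Rightarrow> ('g::ab_group_add \<Rightarrow> 'a) \<Rightarrow> ('g \<Rightarrow> 'a) \<Rightarrow> ('g \<Rightarrow> 'a)" where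
  "lmul mul f g = (\<lambda>l. \<Sum>mu\<in>{mu. f mu \<noteq> 0}. mul (f mu) (g (l - mu)))"

definition gen_subgroup :: "'g::ab_group_add set \<Rightarrow> 'g set" where
  "gen_subgroup S = \<Inter>{H. S \<subseteq> H \<and> 0 \<in> H \<and> (\<forall>x\<in>H. \<forall>y\<in>H. x - y \<in> H)}"

definition grading_support :: "('g \<Rightarrow> 'b::zero set) \<Rightarrow> 'g set" where
  "grading_support C = {l. \<exists>x\<in>C l. x \<noteq> 0}"

text \<open>A graded algebra is given by its carrier B, its homogeneous components C, and the
  ambient scalar multiplication and product (addition is that of the ambient type).\<close>
definition support_isomorphic ::
  "('k \<Rightarrow> 'b::ab_group_add \<Rightarrow> 'b) \<Rightarrow> ('b \<Rightarrow> 'b \<Rightarrow> 'b) \<Rightarrow> 'b set \<Rightarrow> ('g::ab_group_add \<Rightarrow> 'b set)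
   \<Rightarrow> ('k \<Rightarrow> 'c::ab_group_add \<Rightarrow> 'c) \<Rightarrow> ('c \<Rightarrow> 'c \<Rightarrow> 'c) \<Rightarrow> 'c set \<Rightarrow> ('g \<Rightarrow> 'c set) \<Rightarrow> bool" where
  "support_isomorphic sc mul B C sc' mul' B' C' \<longleftrightarrow>
     (\<exists>\<psi> \<psi>su.
        bij_betw \<psi> B B' \<and>
        (\<forall>x\<in>B. \<forall>y\<in>B. \<psi> (x + y) = \<psi> x + \<psi> y \<and> \<psi> (mul x y) = mul' (\<psi> x) (\<psi> y)) \<and>
        (\<forall>c. \<forall>x\<in>B. \<psi> (sc c x) = sc' c (\<psi> x)) \<and>
        bij_betw \<psi>su (gen_subgroup (grading_support C)) (gen_subgroup (grading_support C')) \<and>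
        (\<forall>x\<in>gen_subgroup (grading_support C). \<forall>y\<in>gen_subgroup (grading_support C).
            \<psi>su (x + y) = \<psi>su x + \<psi>su y) \<and>
        (\<forall>l\<in>gen_subgroup (grading_support C). \<psi> ` C l = C' (\<psi>su l)))"

end

theory Submission
  imports Defs
begin

lemma aut_order_props:
  assumes "(\<phi>::'a\<Rightarrow>'a) ^^ m = id" "0 < m"
  shows "0 < aut_order \<phi>" "\<phi> ^^ aut_order \<phi> = id" "aut_order \<phi> dvd m"
proof -
  have ex: "0 < m \<and> \<phi> ^^ m = id" using assms by auto
  have L: "0 < aut_order \<phi> \<and> \<phi> ^^ aut_order \<phi> = id"
    unfolding aut_order_def by (rule LeastI[of _ m], rule ex)
  then show "0 < aut_order \<phi>" "\<phi> ^^ aut_order \<phi> = id" by auto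
  define o' where "o' = aut_order \<phi>"
  have o: "0 < o'" "\<phi> ^^ o' = id" using L o'_def by auto
  define r where "r = m mod o'"
  have "m = o' * (m div o') + r" unfolding r_def by simp
  hence "\<phi> ^^ m = (\<phi> ^^ o') ^^ (m div o') \<circ> \<phi> ^^ r"
    by (metis funpow_add funpow_mult)
  hence rid: "\<phi> ^^ r = id" using o assms(1) by simp
  have "r < o'" unfolding r_def using o by simp
  have "r = 0"
  proof (rule ccontr)
    assume "r \<noteq> 0"
    hence "0 < r \<and> \<phi> ^^ r = id" using rid by simp
    hence "aut_order \<phi> \<le> r" unfolding aut_order_def by (rule Least_le)
    thus False using \<open>r < o'\<close> o'_def by simp
  qed
  thus "aut_order \<phi> dvd m" using r_def o'_def by (simp add: mod_eq_0_iff_dvd)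
qed

lemma root_dvd:
  assumes "root_system (zeta::nat\<Rightarrow>'k::field)" "0 < n" "zeta n powi j = 1"
  shows "int n dvd j"
proof -
  have p: "zeta n ^ n = 1" and prim: "\<And>j. 0 < j \<Longrightarrow> j < n \<Longrightarrow> zeta n ^ j \<noteq> 1"
    using assms(1,2) unfolding root_system_def by auto
  have nz: "zeta n \<noteq> 0" using p assms(2) by (metis power_0_left less_not_refl2 zero_neq_one)
  define r where "r = j mod int n"
  have r0: "0 \<le> r" "r < int n" unfolding r_def using assms(2) by auto
  have "j = int n * (j div int n) + r" unfolding r_def by simp
  hence "zeta n powi j = (zeta n powi (int n)) powi (j div int n) * zeta n powi r"
    by (metis power_int_add power_int_mult nz)
  hence "zeta n powi r = 1" using assms(3) p by simp
  hence "zeta n ^ nat r = 1" using r0 by (simp add: power_int_nonneg_exp)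
  hence "nat r = 0" using prim r0 by (metis nat_less_iff not_gr0)
  hence "r = 0" using r0 by simp
  thus ?thesis unfolding r_def by auto
qed

lemma root_pow:
  assumes "root_system (zeta::nat\<Rightarrow>'k::field)" "0 < d" "0 < o'"
  shows "zeta (d * o') powi (int d * a) = zeta o' powi a"
proof -
  have "zeta (d * o') ^ d = zeta o'" using assms unfolding root_system_def by auto
  thus ?thesis by (simp add: power_int_mult)
qed

lemma eig_iter:
  assumes "vector_space sc" "Vector_Spaces.linear sc sc f" "f u = sc c u"
  shows "(f ^^ k) u = sc (c ^ k) u"
proof -
  interpret vs: vector_space sc by fact
  interpret lf: Vector_Spaces.linear sc sc f by fact
  show ?thesis
proof (induction k)
  case 0
  then show ?case by simp
next
  case (Suc k)
  have "(f ^^ Suc k) u = f (sc (c ^ k) u)" using Suc by simp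
  also have "\<dots> = sc (c ^ k) (f u)" by (simp add: lf.scale)
  also have "\<dots> = sc (c ^ Suc k) u" using assms(3)
    by (simp add: mult.commute)
  finally show ?case .
qed
qed

lemma gen_subgroup_props:
  fixes S :: "'g::ab_group_add set"
  shows "S \<subseteq> gen_subgroup S" "0 \<in> gen_subgroup S"
    "\<And>x y. x \<in> gen_subgroup S \<Longrightarrow> y \<in> gen_subgroup S \<Longrightarrow> x - y \<in> gen_subgroup S"
    "\<And>H. S \<subseteq> H \<Longrightarrow> 0 \<in> H \<Longrightarrow> (\<forall>x\<in>H. \<forall>y\<in>H. x - y \<in> H) \<Longrightarrow> gen_subgroup S \<subseteq> H"
  unfolding gen_subgroup_def by auto

lemma gen_subgroup_image:
  fixes e :: "'g::ab_group_add \<Rightarrow> 'h::ab_group_add"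
  assumes hom: "\<And>a b. e (a - b) = e a - e b"
  shows "gen_subgroup (e ` S) = e ` gen_subgroup S"
proof
  have e0: "e 0 = 0" using hom[of 0 0] by simp
  show "gen_subgroup (e ` S) \<subseteq> e ` gen_subgroup S"
  proof (rule gen_subgroup_props(4))
    show "e ` S \<subseteq> e ` gen_subgroup S" using gen_subgroup_props(1) by blast
    show "0 \<in> e ` gen_subgroup S" using gen_subgroup_props(2)[of S] e0 by (metis image_eqI)
    show "\<forall>x\<in>e ` gen_subgroup S. \<forall>y\<in>e ` gen_subgroup S. x - y \<in> e ` gen_subgroup S"
    proof (intro ballI)
      fix x y assume "x \<in> e ` gen_subgroup S" "y \<in> e ` gen_subgroup S"
      then obtain a b where "a \<in> gen_subgroup S" "b \<in> gen_subgroup S" "x = e a" "y = e b" by blast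
      moreover have "a - b \<in> gen_subgroup S" using gen_subgroup_props(3) calculation by blast
      ultimately show "x - y \<in> e ` gen_subgroup S" using hom[of a b] by (metis image_eqI)
    qed
  qed
  have "gen_subgroup S \<subseteq> {x. e x \<in> gen_subgroup (e ` S)}"
  proof (rule gen_subgroup_props(4))
    show "S \<subseteq> {x. e x \<in> gen_subgroup (e ` S)}" using gen_subgroup_props(1) by blast
    show "0 \<in> {x. e x \<in> gen_subgroup (e ` S)}" using gen_subgroup_props(2) e0 by simp
    show "\<forall>x\<in>{x. e x \<in> gen_subgroup (e ` S)}. \<forall>y\<in>{x. e x \<in> gen_subgroup (e ` S)}.
            x - y \<in> {x. e x \<in> gen_subgroup (e ` S)}"
      using gen_subgroup_props(3)[where S="e ` S"] hom by simp
  qed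
  thus "e ` gen_subgroup S \<subseteq> gen_subgroup (e ` S)" by blast
qed

theorem lemma2p2p4:
  fixes sc :: "'k::field_char_0 \<Rightarrow> 'a::ab_group_add \<Rightarrow> 'a"
    and mul :: "'a \<Rightarrow> 'a \<Rightarrow> 'a"
    and zeta :: "nat \<Rightarrow> 'k"
    and \<sigma> :: "'n::finite \<Rightarrow> 'a \<Rightarrow> 'a"
    and m :: "'n \<Rightarrow> nat"
  assumes "alg_closed TYPE('k)"
    and "root_system zeta"
    and "is_algebra sc mul"
    and "\<sigma> \<in> Aut_cfo sc mul"
    and "\<forall>i. 0 < m i"
    and "\<forall>i. (\<sigma> i) ^^ (m i) = id"
  shows "support_isomorphic
           (lscale sc) (lmul mul) (multiloop sc zeta \<sigma> m) (multiloop_deg sc zeta \<sigma> m)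
           (lscale sc) (lmul mul) (multiloop sc zeta \<sigma> (\<lambda>i. aut_order (\<sigma> i)))
           (multiloop_deg sc zeta \<sigma> (\<lambda>i. aut_order (\<sigma> i)))"
proof -
  note rs = assms(2)
  have vsp: "vector_space sc" using assms(3) unfolding is_algebra_def by auto
  interpret vs: vector_space sc by (rule vsp)
  have lin: "\<And>i. Vector_Spaces.linear sc sc (\<sigma> i)"
    using assms(4) unfolding Aut_cfo_def is_automorphism_def by auto
  have lin0: "\<sigma> i 0 = 0" for i
  proof -
    interpret lf: Vector_Spaces.linear sc sc "\<sigma> i" by (rule lin)
    show ?thesis by simp
  qed
  define o' where "o' = (\<lambda>i. aut_order (\<sigma> i))"
  have opos: "\<And>i. 0 < o' i" and oid: "\<And>i. \<sigma> i ^^ o' i = id" and odvd: "\<And>i. o' i dvd m i"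
    using aut_order_props[OF assms(6)[rule_format] assms(5)[rule_format]] unfolding o'_def by auto
  define d where "d = (\<lambda>i. m i div o' i)"
  have mdo: "\<And>i. m i = d i * o' i" unfolding d_def using odvd by simp
  have dpos: "\<And>i. 0 < d i" using mdo assms(5) by (metis mult_eq_0_iff not_gr0)
  define e :: "('n \<Rightarrow> int) \<Rightarrow> ('n \<Rightarrow> int)" where "e = (\<lambda>a i. int (d i) * a i)"
  have einj: "inj e"
  proof (rule injI)
    fix a b assume "e a = e b"
    hence "\<And>i. int (d i) * a i = int (d i) * b i" unfolding e_def by metis
    thus "a = b" using dpos by (metis ext mult_cancel_left of_nat_eq_0_iff less_irrefl)
  qed
  have ehom: "\<And>a b. e (a - b) = e a - e b" unfolding e_def by (simp add: fun_eq_iff algebra_simps)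
  have ehomp: "\<And>a b. e (a + b) = e a + e b" unfolding e_def by (simp add: fun_eq_iff algebra_simps)
  have eigeq: "\<And>a. eig_comp sc zeta \<sigma> m (e a) = eig_comp sc zeta \<sigma> o' a"
    unfolding eig_comp_def e_def using root_pow[OF rs dpos opos] mdo by simp
  have zeig: "\<And>mm l. 0 \<in> eig_comp sc zeta \<sigma> mm l" unfolding eig_comp_def using lin0 by simp
  have supp: "l \<in> range e" if u: "u \<in> eig_comp sc zeta \<sigma> m l" "u \<noteq> 0" for u l
  proof -
    have dv: "int (d i) dvd l i" for i
    proof -
      define c where "c = zeta (m i) powi l i"
      have "\<sigma> i u = sc c u" using u unfolding eig_comp_def c_def by auto
      hence "(\<sigma> i ^^ o' i) u = sc (c ^ o' i) u" by (rule eig_iter[OF vsp lin])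
      hence "sc (c ^ o' i) u = sc 1 u" using oid by simp
      hence "c ^ o' i = 1" using u(2) vs.scale_cancel_right by blast
      hence "zeta (m i) powi (l i * int (o' i)) = 1" unfolding c_def by (simp add: power_int_power')
      hence "int (m i) dvd l i * int (o' i)" using root_dvd[OF rs assms(5)[rule_format]] by blast
      hence "int (d i) * int (o' i) dvd l i * int (o' i)" using mdo by (metis of_nat_mult)
      thus ?thesis using opos by (metis dvd_mult_cancel_right of_nat_0_less_iff less_irrefl)
    qed
    have "l = e (\<lambda>i. l i div int (d i))" unfolding e_def using dv by (simp add: fun_eq_iff)
    thus ?thesis by blast
  qed

  define B1 where "B1 = multiloop sc zeta \<sigma> m"
  define B2 where "B2 = multiloop sc zeta \<sigma> o'"
  define C1 where "C1 = multiloop_deg sc zeta \<sigma> m"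
  define C2 where "C2 = multiloop_deg sc zeta \<sigma> o'"
  define \<psi> :: "(('n \<Rightarrow> int) \<Rightarrow> 'a) \<Rightarrow> (('n \<Rightarrow> int) \<Rightarrow> 'a)" where "\<psi> = (\<lambda>f a. f (e a))"
  define \<phi> :: "(('n \<Rightarrow> int) \<Rightarrow> 'a) \<Rightarrow> (('n \<Rightarrow> int) \<Rightarrow> 'a)"
    where "\<phi> = (\<lambda>g l. if l \<in> range e then g (inv e l) else 0)"
  have ie: "\<And>a. inv e (e a) = a" using einj by (simp add: inv_f_f)
  have F1: "l \<in> range e" if "f \<in> B1" "f l \<noteq> 0" for f l
    using that supp unfolding B1_def multiloop_def by blast
  have F2: "\<psi> f \<in> B2" if f: "f \<in> B1" for f
  proof -
    have "finite {l. f l \<noteq> 0}" using f unfolding B1_def multiloop_def by blast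
    hence "finite (e -` {l. f l \<noteq> 0})" by (rule finite_vimageI) (use einj in auto)
    moreover have "e -` {l. f l \<noteq> 0} = {a. \<psi> f a \<noteq> 0}" unfolding \<psi>_def by auto
    ultimately show ?thesis using f eigeq unfolding B1_def B2_def multiloop_def \<psi>_def by auto
  qed
  have F3: "\<phi> g \<in> B1" if g: "g \<in> B2" for g
  proof -
    have "finite {a. g a \<noteq> 0}" using g unfolding B2_def multiloop_def by blast
    hence "finite (e ` {a. g a \<noteq> 0})" by simp
    moreover have "{l. \<phi> g l \<noteq> 0} \<subseteq> e ` {a. g a \<noteq> 0}" unfolding \<phi>_def by (auto simp: ie)
    ultimately have "finite {l. \<phi> g l \<noteq> 0}" by (rule finite_subset[rotated])
    moreover have "\<phi> g l \<in> eig_comp sc zeta \<sigma> m l" for l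
    proof (cases "l \<in> range e")
      case True
      then obtain a where "l = e a" by blast
      thus ?thesis using g eigeq unfolding B2_def multiloop_def \<phi>_def by (auto simp: ie)
    next
      case False
      thus ?thesis using zeig unfolding \<phi>_def by simp
    qed
    ultimately show ?thesis unfolding B1_def multiloop_def by blast
  qed
  have F4: "\<phi> (\<psi> f) = f" if f: "f \<in> B1" for f
  proof
    fix l show "\<phi> (\<psi> f) l = f l"
    proof (cases "l \<in> range e")
      case True
      then obtain a where "l = e a" by blast
      thus ?thesis unfolding \<phi>_def \<psi>_def by (simp add: ie)
    next
      case False
      thus ?thesis using F1[OF f, of l] unfolding \<phi>_def by auto
    qed
  qed
  have F5: "\<psi> (\<phi> g) = g" for g unfolding \<phi>_def \<psi>_def by (simp add: ie)
  have bij1: "bij_betw \<psi> B1 B2"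
    by (rule bij_betw_byWitness[where f'=\<phi>]) (use F2 F3 F4 F5 in auto)
  have addh: "\<psi> (x + y) = \<psi> x + \<psi> y" for x y unfolding \<psi>_def by (simp add: plus_fun_def)
  have sch: "\<psi> (lscale sc c x) = lscale sc c (\<psi> x)" for c x unfolding \<psi>_def lscale_def by simp
  have mulh: "\<psi> (lmul mul x y) = lmul mul (\<psi> x) (\<psi> y)" if x: "x \<in> B1" for x y
  proof
    fix a
    have supe: "{\<mu>. x \<mu> \<noteq> 0} = e ` {\<nu>. \<psi> x \<nu> \<noteq> 0}"
      using F1[OF x] unfolding \<psi>_def by auto
    have "\<psi> (lmul mul x y) a = (\<Sum>\<mu>\<in>{\<mu>. x \<mu> \<noteq> 0}. mul (x \<mu>) (y (e a - \<mu>)))"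
      unfolding \<psi>_def lmul_def by simp
    also have "\<dots> = (\<Sum>\<nu>\<in>{\<nu>. \<psi> x \<nu> \<noteq> 0}. mul (x (e \<nu>)) (y (e a - e \<nu>)))"
      unfolding supe by (subst sum.reindex) (use einj in \<open>auto simp: inj_on_def\<close>)
    also have "\<dots> = lmul mul (\<psi> x) (\<psi> y) a"
      unfolding lmul_def \<psi>_def by (simp add: ehom)
    finally show "\<psi> (lmul mul x y) a = lmul mul (\<psi> x) (\<psi> y) a" .
  qed
  have G1: "\<psi> ` C1 (e a) = C2 a" for a
  proof
    show "\<psi> ` C1 (e a) \<subseteq> C2 a"
    proof
      fix g assume "g \<in> \<psi> ` C1 (e a)"
      then obtain f where f: "f \<in> C1 (e a)" "g = \<psi> f" by blast
      have "f \<in> B1" using f unfolding C1_def B1_def multiloop_deg_def by blast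
      moreover have "\<forall>b. b \<noteq> a \<longrightarrow> \<psi> f b = 0"
        using f einj unfolding C1_def multiloop_deg_def \<psi>_def by (auto dest: injD)
      ultimately show "g \<in> C2 a" using F2 f unfolding C2_def B2_def multiloop_deg_def by auto
    qed
    show "C2 a \<subseteq> \<psi> ` C1 (e a)"
    proof
      fix g assume g: "g \<in> C2 a"
      have gB: "g \<in> B2" using g unfolding C2_def B2_def multiloop_deg_def by blast
      have "\<forall>l. l \<noteq> e a \<longrightarrow> \<phi> g l = 0"
        using g unfolding C2_def multiloop_deg_def \<phi>_def by (auto simp: ie)
      hence "\<phi> g \<in> C1 (e a)" using F3[OF gB] unfolding C1_def B1_def multiloop_deg_def by auto
      thus "g \<in> \<psi> ` C1 (e a)" using F5[of g] by (metis image_eqI)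
    qed
  qed
  have G2: "f = 0" if "f \<in> C1 l" "l \<notin> range e" for f l
  proof -
    have "f \<mu> = 0" for \<mu>
      using that F1[of f l] unfolding C1_def B1_def multiloop_deg_def by (cases "\<mu> = l") auto
    thus ?thesis by (simp add: fun_eq_iff)
  qed
  have C1B: "\<And>f l. f \<in> C1 l \<Longrightarrow> f \<in> B1" unfolding C1_def B1_def multiloop_deg_def by blast
  have S12: "grading_support C1 = e ` grading_support C2"
  proof
    show "grading_support C1 \<subseteq> e ` grading_support C2"
    proof
      fix l assume "l \<in> grading_support C1"
      then obtain f where f: "f \<in> C1 l" "f \<noteq> 0" unfolding grading_support_def by blast
      then obtain a where a: "l = e a" using G2 by blast
      have "\<psi> f \<in> C2 a" using G1[of a] f a by blast
      moreover have "\<psi> f \<noteq> 0"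
      proof
        assume "\<psi> f = 0"
        hence "f = \<phi> 0" using F4[OF C1B[OF f(1)]] by simp
        moreover have "\<phi> 0 = 0" unfolding \<phi>_def by (rule ext) simp
        ultimately show False using f(2) by simp
      qed
      ultimately show "l \<in> e ` grading_support C2" using a unfolding grading_support_def by blast
    qed
    show "e ` grading_support C2 \<subseteq> grading_support C1"
    proof
      fix l assume "l \<in> e ` grading_support C2"
      then obtain a g where a: "l = e a" "g \<in> C2 a" "g \<noteq> 0" unfolding grading_support_def by blast
      then obtain f where "f \<in> C1 (e a)" "g = \<psi> f" using G1[of a] by blast
      moreover have "f \<noteq> 0" using calculation a(3) unfolding \<psi>_def by auto
      ultimately show "l \<in> grading_support C1" using a unfolding grading_support_def by blast
    qed
  qed
  have GS: "gen_subgroup (grading_support C1) = e ` gen_subgroup (grading_support C2)"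
    unfolding S12 by (rule gen_subgroup_image) (rule ehom)
  have bij2: "bij_betw (inv e) (gen_subgroup (grading_support C1)) (gen_subgroup (grading_support C2))"
    unfolding GS by (rule bij_betw_byWitness[where f'=e]) (auto simp: ie)
  have addsu: "inv e (x + y) = inv e x + inv e y" if "x \<in> range e" "y \<in> range e" for x y
    using that by (auto simp: ie simp flip: ehomp)
  have lst: "\<psi> ` C1 l = C2 (inv e l)" if lg: "l \<in> gen_subgroup (grading_support C1)" for l
  proof -
    obtain a where "l = e a" using lg unfolding GS by blast
    thus ?thesis using G1[of a] by (simp add: ie)
  qed
  have "support_isomorphic (lscale sc) (lmul mul) B1 C1 (lscale sc) (lmul mul) B2 C2"
    unfolding support_isomorphic_def
    apply (rule exI[of _ \<psi>], rule exI[of _ "inv e"])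
    using bij1 addh sch mulh bij2 addsu lst GS by auto
  thus ?thesis unfolding B1_def B2_def C1_def C2_def o'_def .
qed

end
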